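(* Let $S \geq 1$ and, for $i = 1,\dots,S$, let $\boldsymbol{M}_i \in \mathbb{R}^{m_i \times m_i}$ be symmetric positive definite, let $\boldsymbol{K}_i \in \mathbb{R}^{m_i \times m_i}$ be symmetric positive semidefinite, and let $\boldsymbol{C}_i \in \mathbb{R}^{p \times m_i}$ be signed Boolean matrices such that $[\boldsymbol{C}_1 \ \cdots \ \boldsymbol{C}_S]$ has full row rank $p$. Let $0 \leq \gamma \leq 1$ and $\Delta t > 0$, and if $\gamma < 1/2$ assume in addition that $\Delta t \, (1-2\gamma)\, \omega_i^{\max} < 2$ for every $i$, where $\omega_i^{\max}$ is the largest eigenvalue of $\boldsymbol{K}_i \boldsymbol{\phi} = \omega \boldsymbol{M}_i \boldsymbol{\phi}$. Suppose sequences $\boldsymbol{d}_i^{(n)}, \boldsymbol{v}_i^{(n)} \in \mathbb{R}^{m_i}$ and $\boldsymbol{\lambda}^{(n)} \in \mathbb{R}^p$, $n\ge 0$, satisfy (the $\boldsymbol{v}$-continuity method with zero external forcing): for all $n \geq 0$ and all $i$, $\boldsymbol{M}_i \boldsymbol{v}_i^{(n)} + \boldsymbol{K}_i \boldsymbol{d}_i^{(n)} = \boldsymbol{C}_i^{\mathrm{T}} \boldsymbol{\lambda}^{(n)}$ and $\sum_{i=1}^S \boldsymbol{C}_i \boldsymbol{v}_i^{(n)} = \boldsymbol{0}$; and for all $n \geq 1$, $\boldsymbol{d}_i^{(n)} = \boldsymbol{d}_i^{(n-1)} + \Delta t\left((1-\gamma)\boldsymbol{v}_i^{(n-1)} + \gamma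 \boldsymbol{v}_i^{(n)}\right)$. Then the sequences $(\boldsymbol{v}_i^{(n)})_{n}$, $(\boldsymbol{d}_i^{(n+1)} - \boldsymbol{d}_i^{(n)})_{n}$ ($i = 1,\dots,S$) and $(\boldsymbol{\lambda}^{(n+1)} - \boldsymbol{\lambda}^{(n)})_{n}$ are bounded.
   Context: A signed Boolean matrix is a matrix whose entries are in $\{-1,0,+1\}$ and each of whose rows has at most one nonzero entry. A sequence of vectors is bounded if there is a constant $C$ independent of $n$ with $\|\boldsymbol{x}^{(n)}\| < C$ for all $n$. *)

theory Defs
  imports "Jordan_Normal_Form.Matrix" "Jordan_Normal_Form.DL_Rank"
begin

definition vnorm :: "real vec \<Rightarrow> real" where
  "vnorm x = sqrt (x \<bullet> x)"

definition bounded_seq :: "(nat \<Rightarrow> real vec) \<Rightarrow> bool" where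
  "bounded_seq x \<longleftrightarrow> (\<exists>C. \<forall>n. vnorm (x n) < C)"

definition symmetric_mat :: "real mat \<Rightarrow> bool" where
  "symmetric_mat A \<longleftrightarrow> square_mat A \<and> transpose_mat A = A"

definition sym_pos_def :: "real mat \<Rightarrow> bool" where
  "sym_pos_def A \<longleftrightarrow> symmetric_mat A \<and>
     (\<forall>x \<in> carrier_vec (dim_row A). x \<noteq> 0\<^sub>v (dim_row A) \<longrightarrow> x \<bullet> (A *\<^sub>v x) > 0)"

definition sym_pos_semidef :: "real mat \<Rightarrow> bool" where
  "sym_pos_semidef A \<longleftrightarrow> symmetric_mat A \<and>
     (\<forall>x \<in> carrier_vec (dim_row A). x \<bullet> (A *\<^sub>v x) \<ge> 0)"

definition signed_boolean :: "real mat \<Rightarrow> bool" where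
  "signed_boolean A \<longleftrightarrow>
     (\<forall>r < dim_row A. \<forall>c < dim_col A. A $$ (r,c) \<in> {-1, 0, 1}) \<and>
     (\<forall>r < dim_row A. \<forall>c1 < dim_col A. \<forall>c2 < dim_col A.
        A $$ (r,c1) \<noteq> 0 \<longrightarrow> A $$ (r,c2) \<noteq> 0 \<longrightarrow> c1 = c2)"

definition gen_eigenvalues :: "real mat \<Rightarrow> real mat \<Rightarrow> real set" where
  "gen_eigenvalues K M = {\<omega>. \<exists>\<phi> \<in> carrier_vec (dim_col K).
       \<phi> \<noteq> 0\<^sub>v (dim_col K) \<and> K *\<^sub>v \<phi> = \<omega> \<cdot>\<^sub>v (M *\<^sub>v \<phi>)}"

definition omega_max :: "real mat \<Rightarrow> real mat \<Rightarrow> real" where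
  "omega_max K M = Max (gen_eigenvalues K M)"

definition hblock :: "nat \<Rightarrow> nat \<Rightarrow> (nat \<Rightarrow> real mat) \<Rightarrow> real mat" where
  "hblock p S C = mat_of_cols p (concat (map (\<lambda>i. cols (C i)) [1..<S+1]))"

end

theory Submission
  imports Defs "Jordan_Normal_Form.Char_Poly" "HOL-Analysis.Function_Topology"
begin


lemma sphere_min:
  fixes g :: "real vec \<Rightarrow> real" and n :: nat
  defines "T \<equiv> {f::nat\<Rightarrow>real. (\<forall>j. n \<le> j \<longrightarrow> f j = 0) \<and> (\<Sum>j<n. (f j)^2) = 1}"
  assumes n: "n > 0" and cont: "continuous_on T (\<lambda>f. g (vec n f))"
  shows "\<exists>x\<in>carrier_vec n. x \<bullet> x = 1 \<and> (\<forall>y\<in>carrier_vec n. y \<bullet> y = 1 \<longrightarrow> g x \<le> g y)"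
proof -
  define B where "B = PiE UNIV (\<lambda>j::nat. if j < n then {-1..1::real} else {0})"
  have cB: "compact B"
  proof -
    have "compactin (product_topology (\<lambda>i. euclidean) UNIV) B"
      unfolding B_def by (subst compactin_PiE) auto
    then show ?thesis by (simp add: euclidean_product_topology)
  qed
  have TB: "T \<subseteq> B"
  proof
    fix f assume f: "f \<in> T"
    have "\<bar>f j\<bar> \<le> 1" if "j < n" for j
    proof -
      have "(f j)^2 \<le> (\<Sum>j<n. (f j)^2)"
        using that by (intro member_le_sum) auto
      then have "(f j)^2 \<le> 1" using f unfolding T_def by simp
      then show ?thesis by (simp add: abs_square_le_1)
    qed
    then show "f \<in> B" using f unfolding B_def T_def by (auto simp: abs_le_iff)
  qed
  have cT: "closed T"
  proof -
    have "T = (\<Inter>j\<in>{n..}. {f. f j = 0}) \<inter> {f. (\<Sum>j<n. (f j)^2) = 1}"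
      unfolding T_def by auto
    moreover have "closed {f::nat\<Rightarrow>real. f j = 0}" for j
      by (rule closed_Collect_eq) (auto intro!: continuous_intros)
    moreover have "closed {f::nat\<Rightarrow>real. (\<Sum>j<n. (f j)^2) = 1}"
      by (rule closed_Collect_eq) (auto intro!: continuous_intros)
    ultimately show ?thesis by auto
  qed
  have cpT: "compact T" using compact_Int_closed[OF cB cT] TB by (simp add: Int_absorb1)
  have ne: "T \<noteq> {}"
  proof -
    have e: "(\<Sum>j<n. (if j = 0 then 1 else 0::real)^2) = (\<Sum>j<n. if j = 0 then 1 else 0)"
      by (rule sum.cong) auto
    have "(\<lambda>j. if j = 0 then 1 else 0) \<in> T" using n unfolding T_def
      by (auto simp: e n)
    then show ?thesis by blast
  qed
  obtain f0 where f0: "f0 \<in> T" "\<forall>f\<in>T. g (vec n f0) \<le> g (vec n f)"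
    using continuous_attains_inf[OF cpT ne cont] by blast
  have sq: "vec n f \<bullet> vec n f = (\<Sum>j<n. (f j)^2)" for f :: "nat \<Rightarrow> real"
    unfolding scalar_prod_def lessThan_atLeast0 by (intro sum.cong) (auto simp: power2_eq_square)
  show ?thesis
  proof (intro bexI conjI ballI impI)
    show "vec n f0 \<bullet> vec n f0 = 1" using f0 sq unfolding T_def by simp
    fix y :: "real vec" assume y: "y \<in> carrier_vec n" "y \<bullet> y = 1"
    define f where "f = (\<lambda>j. if j < n then y $ j else 0)"
    have "vec n f = y" using y(1) unfolding f_def by auto
    moreover have "f \<in> T" unfolding T_def f_def using y sq[of f] \<open>vec n f = y\<close>
      by (auto simp: f_def)
    ultimately show "g (vec n f0) \<le> g y" using f0 by metis
  qed auto
qed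

lemma self_nonneg: "(x::real vec) \<bullet> x \<ge> 0"
  unfolding scalar_prod_def by (intro sum_nonneg) auto

lemma self_pos:
  assumes x: "(x::real vec) \<in> carrier_vec n" "x \<noteq> 0\<^sub>v n"
  shows "x \<bullet> x > 0"
proof -
  obtain i where i: "i < n" "x $ i \<noteq> 0"
    using x by (metis eq_vecI carrier_vecD index_zero_vec(1,2))
  have "x $ i * x $ i \<le> (\<Sum>j\<in>{0..<dim_vec x}. x $ j * x $ j)"
    using i x by (intro member_le_sum) auto
  moreover have "x $ i * x $ i > 0" using i(2) not_real_square_gt_zero by blast
  ultimately show ?thesis unfolding scalar_prod_def by (simp add: scalar_prod_def)
qed

lemma zero_iff_self: "(x::real vec) \<in> carrier_vec n \<Longrightarrow> x \<bullet> x = 0 \<Longrightarrow> x = 0\<^sub>v n"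
  using self_pos by force

lemma homog_zero:
  assumes hom: "\<And>a x. x\<in>carrier_vec n \<Longrightarrow> g (a \<cdot>\<^sub>v x) = a^2 * (g x :: real)"
  shows "g (0\<^sub>v n) = 0"
proof -
  have "0 \<cdot>\<^sub>v 0\<^sub>v n = (0\<^sub>v n :: real vec)" by (intro eq_vecI) auto
  then show ?thesis using hom[of "0\<^sub>v n" 0] by simp
qed

lemma homog_scale:
  assumes hom: "\<And>a x. x\<in>carrier_vec n \<Longrightarrow> g (a \<cdot>\<^sub>v x) = a^2 * (g x :: real)"
    and x: "x \<in> carrier_vec n" "x \<noteq> 0\<^sub>v n"
  obtains y where "y \<in> carrier_vec n" "y \<bullet> y = 1" "g x = (x \<bullet> x) * g y"
proof -
  define r where "r = sqrt (x \<bullet> x)"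
  have xx: "x \<bullet> x > 0" using self_pos x by blast
  then have r: "r > 0" "r^2 = x \<bullet> x" unfolding r_def by auto
  define y where "y = (1/r) \<cdot>\<^sub>v x"
  have yc: "y \<in> carrier_vec n" using x unfolding y_def by simp
  have "y \<bullet> y = (1/r)^2 * (x \<bullet> x)" unfolding y_def using x
    by (simp add: power2_eq_square)
  then have yy: "y \<bullet> y = 1" using r xx by (simp add: power2_eq_square)
  have "r \<cdot>\<^sub>v y = x" unfolding y_def using r(1) by (simp add: smult_smult_assoc)
  then have "g x = r^2 * g y" using hom[OF yc, of r] by simp
  then show ?thesis using that[OF yc yy] r by simp
qed

lemma homog_lower:
  assumes pos: "\<And>x. x\<in>carrier_vec n \<Longrightarrow> x \<noteq> 0\<^sub>v n \<Longrightarrow> g x > (0::real)"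
  and hom: "\<And>a x. x\<in>carrier_vec n \<Longrightarrow> g (a \<cdot>\<^sub>v x) = a^2 * g x"
  and cont: "continuous_on UNIV (\<lambda>f. g (vec n f))"
  shows "\<exists>c>0. \<forall>x\<in>carrier_vec n. c * (x \<bullet> x) \<le> g x"
proof (cases "n = 0")
  case True
  show ?thesis
  proof (intro exI[of _ 1] conjI ballI)
    fix x :: "real vec" assume "x \<in> carrier_vec n"
    then have "x = 0\<^sub>v n" using True by (intro eq_vecI) auto
    then show "1 * (x \<bullet> x) \<le> g x" using homog_zero[of n g, OF hom] by simp
  qed simp
next
  case False
  then obtain u where u: "u \<in> carrier_vec n" "u \<bullet> u = 1" "\<forall>y\<in>carrier_vec n. y \<bullet> y = 1 \<longrightarrow> g u \<le> g y"
    using sphere_min[of n g] continuous_on_subset[OF cont] by blast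
  have "u \<noteq> 0\<^sub>v n" using u(2) by auto
  then have c: "g u > 0" using pos u(1) by blast
  show ?thesis
  proof (intro exI[of _ "g u"] conjI ballI)
    fix x :: "real vec" assume x: "x \<in> carrier_vec n"
    show "g u * (x \<bullet> x) \<le> g x"
    proof (cases "x = 0\<^sub>v n")
      case True then show ?thesis using homog_zero[of n g, OF hom] by simp
    next
      case False
      then obtain y where y: "y \<in> carrier_vec n" "y \<bullet> y = 1" "g x = (x \<bullet> x) * g y"
        using homog_scale[OF hom x] by blast
      then show ?thesis using u(3)[rule_format, OF y(1) y(2)] self_nonneg[of x] by (simp add: mult_right_mono mult.commute)
    qed
  qed (use c in auto)
qed

lemma homog_upper:
  assumes hom: "\<And>a x. x\<in>carrier_vec n \<Longrightarrow> g (a \<cdot>\<^sub>v x) = a^2 * (g x::real)"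
  and cont: "continuous_on UNIV (\<lambda>f. g (vec n f))"
  shows "\<exists>c. \<forall>x\<in>carrier_vec n. g x \<le> c * (x \<bullet> x)"
proof (cases "n = 0")
  case True
  show ?thesis
  proof (intro exI[of _ 1] conjI ballI)
    fix x :: "real vec" assume "x \<in> carrier_vec n"
    then have "x = 0\<^sub>v n" using True by (intro eq_vecI) auto
    then show "g x \<le> 1 * (x \<bullet> x)" using homog_zero[of n g, OF hom] by simp
  qed
next
  case False
  have cont': "continuous_on UNIV (\<lambda>f. - g (vec n f))" using cont by (intro continuous_intros)
  obtain u where u: "u \<in> carrier_vec n" "u \<bullet> u = 1" "\<forall>y\<in>carrier_vec n. y \<bullet> y = 1 \<longrightarrow> - g u \<le> - g y"
    using sphere_min[of n "\<lambda>x. - g x"] continuous_on_subset[OF cont'] False by blast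
  show ?thesis
  proof (intro exI[of _ "g u"] conjI ballI)
    fix x :: "real vec" assume x: "x \<in> carrier_vec n"
    show "g x \<le> g u * (x \<bullet> x)"
    proof (cases "x = 0\<^sub>v n")
      case True then show ?thesis using homog_zero[of n g, OF hom] by simp
    next
      case False
      then obtain y where y: "y \<in> carrier_vec n" "y \<bullet> y = 1" "g x = (x \<bullet> x) * g y"
        using homog_scale[OF hom x] by blast
      then show ?thesis using u(3)[rule_format, OF y(1) y(2)] self_nonneg[of x] by (simp add: mult_right_mono mult.commute)
    qed
  qed
qed

lemma cont_bilin:
  assumes A: "(A::real mat) \<in> carrier_mat k n" and B: "B \<in> carrier_mat k n"
  shows "continuous_on UNIV (\<lambda>f. (A *\<^sub>v vec n f) \<bullet> (B *\<^sub>v vec n f))"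
proof -
  have e: "(A *\<^sub>v vec n f) \<bullet> (B *\<^sub>v vec n f) =
    (\<Sum>r<k. (\<Sum>j<n. A $$ (r,j) * f j) * (\<Sum>j<n. B $$ (r,j) * f j))" for f
    using A B unfolding scalar_prod_def mult_mat_vec_def row_def lessThan_atLeast0
    by (auto intro!: sum.cong)
  show ?thesis unfolding e by (intro continuous_intros) (simp_all add: continuous_on_product_coordinates)
qed

lemma hom_bilin:
  assumes A: "(A::real mat) \<in> carrier_mat k n" and B: "B \<in> carrier_mat k n" and x: "x \<in> carrier_vec n"
  shows "(A *\<^sub>v (a \<cdot>\<^sub>v x)) \<bullet> (B *\<^sub>v (a \<cdot>\<^sub>v x)) = a^2 * ((A *\<^sub>v x) \<bullet> (B *\<^sub>v x))"
  using A B x by (simp add: mult_mat_vec[OF A x] mult_mat_vec[OF B x] power2_eq_square)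

lemma quad_as_bilin:
  assumes A: "(A::real mat) \<in> carrier_mat n n" and x: "x \<in> carrier_vec n"
  shows "x \<bullet> (A *\<^sub>v x) = (1\<^sub>m n *\<^sub>v x) \<bullet> (A *\<^sub>v x)"
  using x by simp

lemma quad_cont:
  assumes A: "(A::real mat) \<in> carrier_mat n n"
  shows "continuous_on UNIV (\<lambda>f. vec n f \<bullet> (A *\<^sub>v vec n f))"
proof -
  have "continuous_on UNIV (\<lambda>f. (1\<^sub>m n *\<^sub>v vec n f) \<bullet> (A *\<^sub>v vec n f))"
    by (rule cont_bilin[OF _ A]) simp
  moreover have "(1\<^sub>m n *\<^sub>v vec n f) = vec n f" for f :: "nat \<Rightarrow> real" by simp
  ultimately show ?thesis by simp
qed

lemma quad_hom:
  assumes A: "(A::real mat) \<in> carrier_mat n n" and x: "x \<in> carrier_vec n"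
  shows "(a \<cdot>\<^sub>v x) \<bullet> (A *\<^sub>v (a \<cdot>\<^sub>v x)) = a^2 * (x \<bullet> (A *\<^sub>v x))"
  using A x by (simp add: mult_mat_vec[OF A x] power2_eq_square)

lemma sym_swap:
  assumes A: "(A::real mat) \<in> carrier_mat n n" and At: "transpose_mat A = A"
    and u: "u \<in> carrier_vec n" and w: "w \<in> carrier_vec n"
  shows "u \<bullet> (A *\<^sub>v w) = w \<bullet> (A *\<^sub>v u)"
proof -
  have "u \<bullet> (A *\<^sub>v w) = (transpose_mat A *\<^sub>v u) \<bullet> w"
    using transpose_vec_mult_scalar[OF A w u] by simp
  also have "\<dots> = w \<bullet> (A *\<^sub>v u)" using At A u w by (simp add: comm_scalar_prod[of _ n])
  finally show ?thesis .
qed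

lemma quad_expand:
  assumes A: "(A::real mat) \<in> carrier_mat n n" and At: "transpose_mat A = A"
    and u: "u \<in> carrier_vec n" and w: "w \<in> carrier_vec n"
  shows "(u + t \<cdot>\<^sub>v w) \<bullet> (A *\<^sub>v (u + t \<cdot>\<^sub>v w)) =
     u \<bullet> (A *\<^sub>v u) + 2 * t * (w \<bullet> (A *\<^sub>v u)) + t^2 * (w \<bullet> (A *\<^sub>v w))"
proof -
  have "A *\<^sub>v (u + t \<cdot>\<^sub>v w) = A *\<^sub>v u + t \<cdot>\<^sub>v (A *\<^sub>v w)"
    using A u w by (simp add: mult_add_distrib_mat_vec[OF A] mult_mat_vec[OF A w])
  moreover have "(u + t \<cdot>\<^sub>v w) \<bullet> (A *\<^sub>v u + t \<cdot>\<^sub>v (A *\<^sub>v w)) =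
     u \<bullet> (A *\<^sub>v u) + t * (u \<bullet> (A *\<^sub>v w)) + t * (w \<bullet> (A *\<^sub>v u)) + t^2 * (w \<bullet> (A *\<^sub>v w))"
    using A u w by (simp add: add_scalar_prod_distrib[of _ n] scalar_prod_add_distrib[of _ n] power2_eq_square algebra_simps)
  ultimately show ?thesis using sym_swap[OF A At u w] by simp
qed

lemma minus_zero_eq:
  assumes "(a::real vec) \<in> carrier_vec n" "b \<in> carrier_vec n" "a - b = 0\<^sub>v n"
  shows "a = b"
proof (rule eq_vecI)
  fix i assume "i < dim_vec b"
  then have i: "i < n" using assms by simp
  have "(a - b) $ i = a $ i - b $ i" using i assms(1,2) by simp
  moreover have "(a - b) $ i = 0" using i assms(3) by simp
  ultimately show "a $ i = b $ i" by simp
qed (use assms in simp)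

lemma scale_unit:
  assumes x: "(x::real vec) \<in> carrier_vec n" "x \<noteq> 0\<^sub>v n"
  shows "\<exists>y r. y \<in> carrier_vec n \<and> y \<bullet> y = 1 \<and> r > 0 \<and> x = r \<cdot>\<^sub>v y"
proof -
  define r where "r = sqrt (x \<bullet> x)"
  have xx: "x \<bullet> x > 0" using self_pos x by blast
  then have r: "r > 0" "r^2 = x \<bullet> x" unfolding r_def by auto
  define y where "y = (1/r) \<cdot>\<^sub>v x"
  have yc: "y \<in> carrier_vec n" using x unfolding y_def by simp
  have "y \<bullet> y = (1/r)^2 * (x \<bullet> x)" unfolding y_def using x
    by (simp add: power2_eq_square)
  then have yy: "y \<bullet> y = 1" using r xx by (simp add: power2_eq_square)
  have "r \<cdot>\<^sub>v y = x" unfolding y_def using r(1) by (simp add: smult_smult_assoc)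
  then show ?thesis using yc yy r by blast
qed

lemma pd_quad:
  assumes M: "(M::real mat) \<in> carrier_mat n n" and pd: "sym_pos_def M"
    and x: "x \<in> carrier_vec n" "x \<noteq> 0\<^sub>v n"
  shows "x \<bullet> (M *\<^sub>v x) > 0"
  using pd x M unfolding sym_pos_def_def by auto

lemma gen_eig_finite:
  assumes M: "(M::real mat) \<in> carrier_mat n n" and K: "K \<in> carrier_mat n n" and pd: "sym_pos_def M"
  shows "finite (gen_eigenvalues K M)"
proof -
  have "det M \<noteq> 0"
  proof
    assume "det M = 0"
    then obtain v where v: "v \<in> carrier_vec n" "v \<noteq> 0\<^sub>v n" "M *\<^sub>v v = 0\<^sub>v n"
      using det_0_iff_vec_prod_zero[OF M] by blast
    then have "v \<bullet> (M *\<^sub>v v) = 0" by simp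
    then show False using pd_quad[OF M pd v(1,2)] by simp
  qed
  then have "M \<in> Units (ring_mat TYPE(real) n undefined)" by (rule det_non_zero_imp_unit[OF M])
  then obtain Mi where Mi: "Mi \<in> carrier_mat n n" "Mi * M = 1\<^sub>m n"
    unfolding Units_def ring_mat_def by auto
  have sub: "gen_eigenvalues K M \<subseteq> {k. poly (char_poly (Mi * K)) k = 0}"
  proof
    fix k assume "k \<in> gen_eigenvalues K M"
    then obtain \<phi> where ph: "\<phi> \<in> carrier_vec n" "\<phi> \<noteq> 0\<^sub>v n" "K *\<^sub>v \<phi> = k \<cdot>\<^sub>v (M *\<^sub>v \<phi>)"
      unfolding gen_eigenvalues_def using K by auto
    have "(Mi * K) *\<^sub>v \<phi> = Mi *\<^sub>v (k \<cdot>\<^sub>v (M *\<^sub>v \<phi>))" using Mi K ph by simp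
    also have "\<dots> = k \<cdot>\<^sub>v (Mi *\<^sub>v (M *\<^sub>v \<phi>))" using Mi M ph
      by (simp add: mult_mat_vec[of Mi n n])
    also have "Mi *\<^sub>v (M *\<^sub>v \<phi>) = \<phi>"
    proof -
      have eq: "(Mi * M) *\<^sub>v \<phi> = \<phi>" unfolding Mi(2) using ph by simp
      show ?thesis by (metis eq assoc_mult_mat_vec[OF Mi(1) M ph(1)])
    qed
    finally have "eigenvector (Mi * K) \<phi> k" unfolding eigenvector_def using ph Mi K by simp
    then have "eigenvalue (Mi * K) k" unfolding eigenvalue_def by blast
    then show "k \<in> {k. poly (char_poly (Mi * K)) k = 0}"
      using eigenvalue_root_char_poly[of "Mi * K" n] Mi K by simp
  qed
  have "char_poly (Mi * K) \<noteq> 0"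
    using degree_monic_char_poly[of "Mi * K" n] Mi K by auto
  then show ?thesis using poly_roots_finite finite_subset[OF sub] by blast
qed

lemma rayleigh:
  assumes M: "(M::real mat) \<in> carrier_mat n n" and K: "K \<in> carrier_mat n n"
    and n: "n > 0" and pd: "sym_pos_def M" and Ks: "symmetric_mat K"
  shows "\<exists>\<omega>\<in>gen_eigenvalues K M. \<forall>x\<in>carrier_vec n. x \<bullet> (K *\<^sub>v x) \<le> \<omega> * (x \<bullet> (M *\<^sub>v x))"
proof -
  define T where "T = {f::nat\<Rightarrow>real. (\<forall>j. n \<le> j \<longrightarrow> f j = 0) \<and> (\<Sum>j<n. (f j)^2) = 1}"
  define q where "q = (\<lambda>x. - ((x \<bullet> (K *\<^sub>v x)) / (x \<bullet> (M *\<^sub>v x))))"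
  have sq: "vec n f \<bullet> vec n f = (\<Sum>j<n. (f j)^2)" for f :: "nat \<Rightarrow> real"
    unfolding scalar_prod_def lessThan_atLeast0 by (intro sum.cong) (auto simp: power2_eq_square)
  have nz: "\<forall>f\<in>T. vec n f \<bullet> (M *\<^sub>v vec n f) \<noteq> 0"
  proof
    fix f assume "f \<in> T"
    then have "vec n f \<bullet> vec n f = 1" using sq unfolding T_def by simp
    then have "vec n f \<noteq> 0\<^sub>v n" by auto
    then show "vec n f \<bullet> (M *\<^sub>v vec n f) \<noteq> 0" using pd_quad[OF M pd] by force
  qed
  have cont: "continuous_on T (\<lambda>f. q (vec n f))"
    unfolding q_def
    by (intro continuous_intros continuous_on_subset[OF quad_cont[OF K]] continuous_on_subset[OF quad_cont[OF M]] nz) auto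
  obtain u where u: "u \<in> carrier_vec n" "u \<bullet> u = 1" "\<forall>y\<in>carrier_vec n. y \<bullet> y = 1 \<longrightarrow> q u \<le> q y"
    using sphere_min[of n q] cont n unfolding T_def by blast
  have u0: "u \<noteq> 0\<^sub>v n" using u(2) by auto
  have Mu: "u \<bullet> (M *\<^sub>v u) > 0" using pd_quad[OF M pd u(1) u0] .
  define \<omega> where "\<omega> = (u \<bullet> (K *\<^sub>v u)) / (u \<bullet> (M *\<^sub>v u))"
  have ineq: "x \<bullet> (K *\<^sub>v x) \<le> \<omega> * (x \<bullet> (M *\<^sub>v x))" if x: "x \<in> carrier_vec n" for x
  proof (cases "x = 0\<^sub>v n")
    case True then show ?thesis by (simp add: scalar_prod_def)
  next
    case False
    then obtain y r where y: "y \<in> carrier_vec n" "y \<bullet> y = 1" "r > 0" "x = r \<cdot>\<^sub>v y"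
      using scale_unit[OF x] by blast
    have y0: "y \<noteq> 0\<^sub>v n" using y(2) by auto
    have My: "y \<bullet> (M *\<^sub>v y) > 0" using pd_quad[OF M pd y(1) y0] .
    have "q u \<le> q y" using u(3) y by blast
    then have "(y \<bullet> (K *\<^sub>v y)) / (y \<bullet> (M *\<^sub>v y)) \<le> \<omega>" unfolding q_def \<omega>_def by simp
    then have "y \<bullet> (K *\<^sub>v y) \<le> \<omega> * (y \<bullet> (M *\<^sub>v y))" using My by (simp add: divide_le_eq)
    then have "r^2 * (y \<bullet> (K *\<^sub>v y)) \<le> r^2 * (\<omega> * (y \<bullet> (M *\<^sub>v y)))"
      by (simp add: mult_left_mono)
    then show ?thesis using y quad_hom[OF K y(1)] quad_hom[OF M y(1)] by (simp add: algebra_simps)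
  qed
  define h where "h = (\<lambda>x. \<omega> * (x \<bullet> (M *\<^sub>v x)) - x \<bullet> (K *\<^sub>v x))"
  have hnn: "h x \<ge> 0" if "x \<in> carrier_vec n" for x using ineq[OF that] unfolding h_def by simp
  have hu: "h u = 0" unfolding h_def \<omega>_def using Mu by simp
  define w where "w = \<omega> \<cdot>\<^sub>v (M *\<^sub>v u) - K *\<^sub>v u"
  have wc: "w \<in> carrier_vec n" unfolding w_def using M K u by simp
  have Ms: "transpose_mat M = M" using pd unfolding sym_pos_def_def symmetric_mat_def by simp
  have Kt: "transpose_mat K = K" using Ks unfolding symmetric_mat_def by simp
  have ww: "w \<bullet> w = \<omega> * (w \<bullet> (M *\<^sub>v u)) - w \<bullet> (K *\<^sub>v u)"
    unfolding w_def using M K u wc[unfolded w_def]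
    by (simp add: scalar_prod_minus_distrib[of _ n])
  have expand: "h (u + t \<cdot>\<^sub>v w) = 2 * t * (w \<bullet> w) + t^2 * h w" for t
  proof -
    have "h (u + t \<cdot>\<^sub>v w) = \<omega> * (u \<bullet> (M *\<^sub>v u) + 2 * t * (w \<bullet> (M *\<^sub>v u)) + t^2 * (w \<bullet> (M *\<^sub>v w)))
       - (u \<bullet> (K *\<^sub>v u) + 2 * t * (w \<bullet> (K *\<^sub>v u)) + t^2 * (w \<bullet> (K *\<^sub>v w)))"
      unfolding h_def quad_expand[OF M Ms u(1) wc, of t] quad_expand[OF K Kt u(1) wc, of t] by simp
    also have "\<dots> = h u + 2 * t * (\<omega> * (w \<bullet> (M *\<^sub>v u)) - w \<bullet> (K *\<^sub>v u)) + t^2 * h w"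
      unfolding h_def by (simp add: algebra_simps)
    finally show ?thesis using hu ww by simp
  qed
  have "w = 0\<^sub>v n"
  proof (rule ccontr)
    assume "w \<noteq> 0\<^sub>v n"
    then have wp: "w \<bullet> w > 0" using self_pos wc by blast
    have hw: "h w \<ge> 0" using hnn wc by blast
    define t where "t = - (w \<bullet> w) / (h w + 1)"
    have "h (u + t \<cdot>\<^sub>v w) \<ge> 0" using hnn u(1) wc by simp
    then have "0 \<le> 2 * t * (w \<bullet> w) + t^2 * h w" using expand by simp
    moreover have "t < 0" unfolding t_def using wp hw by (simp add: divide_pos_pos)
    moreover have "t^2 * h w \<le> - t * (w \<bullet> w)"
    proof -
      have "- t * (h w + 1) = w \<bullet> w" unfolding t_def using hw by simp
      then have "t^2 * h w \<le> t^2 * (h w + 1) - t^2" by (simp add: algebra_simps)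
      also have "\<dots> = t * (t * (h w + 1)) - t^2" by (simp add: power2_eq_square)
      also have "\<dots> = - t * (w \<bullet> w) - t^2" using \<open>- t * (h w + 1) = w \<bullet> w\<close>
        by (metis minus_mult_minus mult_minus_left)
      finally show ?thesis using zero_le_power2[of t] by linarith
    qed
    ultimately have "0 \<le> 2 * (t * (w \<bullet> w)) + - (t * (w \<bullet> w))" by (simp add: mult.assoc)
    then have "0 \<le> t * (w \<bullet> w)" by simp
    moreover have "t * (w \<bullet> w) < 0" using \<open>t < 0\<close> wp by (simp add: mult_neg_pos)
    ultimately show False by simp
  qed
  then have "\<omega> \<cdot>\<^sub>v (M *\<^sub>v u) = K *\<^sub>v u"
    using minus_zero_eq[of "\<omega> \<cdot>\<^sub>v (M *\<^sub>v u)" n "K *\<^sub>v u"] M K u unfolding w_def by simp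
  then have "K *\<^sub>v u = \<omega> \<cdot>\<^sub>v (M *\<^sub>v u)" by simp
  then have "\<omega> \<in> gen_eigenvalues K M" unfolding gen_eigenvalues_def using K u u0 by auto
  then show ?thesis using ineq by blast
qed
lemma rank_orth:
  assumes H: "(H::real mat) \<in> carrier_mat p N" and r: "vec_space.rank p H = p"
    and x: "x \<in> carrier_vec p" and orth: "\<forall>y\<in>set (cols H). y \<bullet> x = 0"
  shows "x = 0\<^sub>v p"
proof -
  interpret vec_space "TYPE(real)" p .
  have cs: "set (cols H) \<subseteq> carrier_vec p" using H cols_dim by blast
  have li0: "lin_indpt {}" unfolding lin_dep_def by auto
  obtain U where U: "finite U" "maximal U (\<lambda>T. T \<subseteq> set (cols H) \<and> lin_indpt T)"
    using maximal_exists_superset[of "set (cols H)" "\<lambda>T. T \<subseteq> set (cols H) \<and> lin_indpt T" "{}"] li0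
    by blast
  have cU: "card U = p" using rank_card_indpt[OF H U(2)] r by simp
  have Us: "U \<subseteq> set (cols H)" "lin_indpt U" using U(2) unfolding maximal_def by auto
  have Uc: "U \<subseteq> carrier_vec p" using Us cs by blast
  have "basis U" by (rule dim_li_is_basis) (use U(1) Uc Us cU dim_is_n in auto)
  then have spanU: "span U = carrier_vec p" unfolding basis_def by simp
  have "x \<bullet> y = 0" if y: "y \<in> U" for y
  proof -
    have "y \<bullet> x = 0" using orth Us(1) y by blast
    moreover have "y \<in> carrier_vec p" using Uc y by blast
    ultimately show ?thesis using comm_scalar_prod[of y p x] x by simp
  qed
  then have "x \<in> orthogonal_complement U" unfolding orthogonal_complement_def
    using x by blast
  then have "x \<in> orthogonal_complement (span U)" using in_orthogonal_complement_span[OF Uc] by simp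
  then have "x \<bullet> x = 0" using x spanU unfolding orthogonal_complement_def by auto
  then show ?thesis using zero_iff_self x by blast
qed



lemma energy_alg:
  fixes aMa aMb bMa bMb aKa aKb bKa bKb aKd bKd R1 R2 R3 R4 \<gamma> \<Delta>t :: real
  assumes "R1 = aMa + aKd" "R2 = aMb + (aKd + \<Delta>t * ((1 - \<gamma>) * aKa + \<gamma> * aKb))"
    "R3 = bMa + bKd" "R4 = bMb + (bKd + \<Delta>t * ((1 - \<gamma>) * bKa + \<gamma> * bKb))"
    "bMa = aMb" "bKa = aKb" "\<alpha> = (1/2 - \<gamma>) * \<Delta>t"
  shows "(bMb - \<alpha> * bKb) - (aMa - \<alpha> * aKa) + \<Delta>t/2 * (aKa + 2*bKa + bKb)
     = (R2 - R1) + (R4 - R3)"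
  unfolding assms by (simp add: algebra_simps)



lemma vec_diff_eq:
  assumes "(d'::real vec) \<in> carrier_vec n" "d \<in> carrier_vec n" "X \<in> carrier_vec n" "d' = d + X"
  shows "d' - d = X"
  by (rule eq_vecI) (use assms in auto)

lemma sumsq:
  assumes x: "(x::real vec) \<in> carrier_vec n" and y: "y \<in> carrier_vec n"
  shows "(x + y) \<bullet> (x + y) \<le> 2 * (x \<bullet> x) + 2 * (y \<bullet> y)"
proof -
  have xy: "y \<bullet> x = x \<bullet> y" using comm_scalar_prod[OF y x] .
  have "(x + y) \<bullet> (x + y) = x \<bullet> x + 2 * (x \<bullet> y) + y \<bullet> y"
    using x y xy by (simp add: add_scalar_prod_distrib[of _ n] scalar_prod_add_distrib[of _ n])
  moreover have "(x - y) \<bullet> (x - y) = x \<bullet> x - 2 * (x \<bullet> y) + y \<bullet> y"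
    using x y xy by (simp add: minus_scalar_prod_distrib[of _ n] scalar_prod_minus_distrib[of _ n])
  moreover have "(x - y) \<bullet> (x - y) \<ge> 0" by (rule self_nonneg)
  ultimately show ?thesis by linarith
qed

lemma sumsq_minus:
  assumes x: "(x::real vec) \<in> carrier_vec n" and y: "y \<in> carrier_vec n"
  shows "(x - y) \<bullet> (x - y) \<le> 2 * (x \<bullet> x) + 2 * (y \<bullet> y)"
proof -
  have xy: "y \<bullet> x = x \<bullet> y" using comm_scalar_prod[OF y x] .
  have "(x + y) \<bullet> (x + y) = x \<bullet> x + 2 * (x \<bullet> y) + y \<bullet> y"
    using x y xy by (simp add: add_scalar_prod_distrib[of _ n] scalar_prod_add_distrib[of _ n])
  moreover have "(x - y) \<bullet> (x - y) = x \<bullet> x - 2 * (x \<bullet> y) + y \<bullet> y"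
    using x y xy by (simp add: minus_scalar_prod_distrib[of _ n] scalar_prod_minus_distrib[of _ n])
  moreover have "(x + y) \<bullet> (x + y) \<ge> 0" by (rule self_nonneg)
  ultimately show ?thesis by linarith
qed

lemma smult_sq:
  assumes x: "(x::real vec) \<in> carrier_vec n"
  shows "(c \<cdot>\<^sub>v x) \<bullet> (c \<cdot>\<^sub>v x) = c^2 * (x \<bullet> x)"
  using x by (simp add: power2_eq_square)

lemma bounded_from_sq:
  assumes "\<And>n. x n \<bullet> x n \<le> B"
  shows "bounded_seq x"
  unfolding bounded_seq_def vnorm_def
proof (intro exI allI)
  fix n
  have "x n \<bullet> x n \<le> max B 0" using assms[of n] by simp
  then have "sqrt (x n \<bullet> x n) \<le> sqrt (max B 0)" by (rule real_sqrt_le_mono)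
  then show "sqrt (x n \<bullet> x n) < sqrt (max B 0) + 1" by linarith
qed



theorem mainTheorem4:
  fixes S p :: nat and m :: "nat \<Rightarrow> nat"
    and M K C :: "nat \<Rightarrow> real mat"
    and \<gamma> \<Delta>t :: real
    and d v :: "nat \<Rightarrow> nat \<Rightarrow> real vec" \<comment> \<open>d i n, v i n\<close>
    and lam :: "nat \<Rightarrow> real vec"
  assumes S: "S \<ge> 1"
    and dimM: "\<And>i. i \<in> {1..S} \<Longrightarrow> M i \<in> carrier_mat (m i) (m i)"
    and dimK: "\<And>i. i \<in> {1..S} \<Longrightarrow> K i \<in> carrier_mat (m i) (m i)"
    and dimC: "\<And>i. i \<in> {1..S} \<Longrightarrow> C i \<in> carrier_mat p (m i)"
    and Mspd: "\<And>i. i \<in> {1..S} \<Longrightarrow> sym_pos_def (M i)"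
    and Kspsd: "\<And>i. i \<in> {1..S} \<Longrightarrow> sym_pos_semidef (K i)"
    and Cbool: "\<And>i. i \<in> {1..S} \<Longrightarrow> signed_boolean (C i)"
    and Crank: "vec_space.rank p (hblock p S C) = p"
    and gam: "0 \<le> \<gamma>" "\<gamma> \<le> 1"
    and dt: "\<Delta>t > 0"
    and stab: "\<gamma> < 1/2 \<Longrightarrow> (\<forall>i \<in> {1..S}. \<Delta>t * (1 - 2*\<gamma>) * omega_max (K i) (M i) < 2)"
    and dimd: "\<And>i n. i \<in> {1..S} \<Longrightarrow> d i n \<in> carrier_vec (m i)"
    and dimv: "\<And>i n. i \<in> {1..S} \<Longrightarrow> v i n \<in> carrier_vec (m i)"
    and diml: "\<And>n. lam n \<in> carrier_vec p"
    and eq1: "\<And>i n. i \<in> {1..S} \<Longrightarrow>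
               M i *\<^sub>v v i n + K i *\<^sub>v d i n = transpose_mat (C i) *\<^sub>v lam n"
    and eq2: "\<And>n r. r < p \<Longrightarrow> (\<Sum>i = 1..S. (C i *\<^sub>v v i n) $ r) = 0"
    and upd: "\<And>i n. i \<in> {1..S} \<Longrightarrow>
               d i (Suc n) = d i n + \<Delta>t \<cdot>\<^sub>v ((1 - \<gamma>) \<cdot>\<^sub>v v i n + \<gamma> \<cdot>\<^sub>v v i (Suc n))"
  shows "(\<forall>i \<in> {1..S}. bounded_seq (\<lambda>n. v i n) \<and> bounded_seq (\<lambda>n. d i (Suc n) - d i n))
         \<and> bounded_seq (\<lambda>n. lam (Suc n) - lam n)"
proof -
  define \<alpha> where "\<alpha> = (1/2 - \<gamma>) * \<Delta>t"
  have L0: "(\<Sum>i\<in>{1..S}. v i n \<bullet> (transpose_mat (C i) *\<^sub>v y)) = 0" if y: "y \<in> carrier_vec p" for n y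
  proof -
    have "v i n \<bullet> (transpose_mat (C i) *\<^sub>v y) = (\<Sum>r<p. y $ r * (C i *\<^sub>v v i n) $ r)" if i: "i \<in> {1..S}" for i
    proof -
      have "v i n \<bullet> (transpose_mat (C i) *\<^sub>v y) = (transpose_mat (C i) *\<^sub>v y) \<bullet> v i n"
        using dimC[OF i] dimv[OF i] y by (intro comm_scalar_prod[of _ "m i"]) auto
      also have "\<dots> = y \<bullet> (C i *\<^sub>v v i n)" using transpose_vec_mult_scalar[OF dimC[OF i] dimv[OF i] y] .
      also have "\<dots> = (\<Sum>r<p. y $ r * (C i *\<^sub>v v i n) $ r)"
        using dimC[OF i] unfolding scalar_prod_def lessThan_atLeast0 by simp
      finally show ?thesis .
    qed
    then have "(\<Sum>i\<in>{1..S}. v i n \<bullet> (transpose_mat (C i) *\<^sub>v y)) = (\<Sum>i\<in>{1..S}. \<Sum>r<p. y $ r * (C i *\<^sub>v v i n) $ r)"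
      by (rule sum.cong[OF refl])
    also have "\<dots> = (\<Sum>r<p. \<Sum>i\<in>{1..S}. y $ r * (C i *\<^sub>v v i n) $ r)"
      by (rule sum.swap)
    also have "\<dots> = (\<Sum>r<p. y $ r * (\<Sum>i\<in>{1..S}. (C i *\<^sub>v v i n) $ r))"
      by (simp add: sum_distrib_left)
    also have "\<dots> = 0" using eq2 by simp
    finally show ?thesis .
  qed
  have E1: "z \<bullet> (M i *\<^sub>v v i n) + z \<bullet> (K i *\<^sub>v d i n) = z \<bullet> (transpose_mat (C i) *\<^sub>v lam n)"
    if i: "i \<in> {1..S}" and z: "z \<in> carrier_vec (m i)" for i n z
  proof -
    have "z \<bullet> (M i *\<^sub>v v i n + K i *\<^sub>v d i n) = z \<bullet> (M i *\<^sub>v v i n) + z \<bullet> (K i *\<^sub>v d i n)"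
      using dimM[OF i] dimK[OF i] dimv[OF i] dimd[OF i] z by (intro scalar_prod_add_distrib[of _ "m i"]) auto
    then show ?thesis using eq1[OF i] by simp
  qed
  have Kupd: "z \<bullet> (K i *\<^sub>v d i (Suc n)) = z \<bullet> (K i *\<^sub>v d i n)
      + \<Delta>t * ((1 - \<gamma>) * (z \<bullet> (K i *\<^sub>v v i n)) + \<gamma> * (z \<bullet> (K i *\<^sub>v v i (Suc n))))"
    if i: "i \<in> {1..S}" and z: "z \<in> carrier_vec (m i)" for i n z
  proof -
    note Kc = dimK[OF i] and a = dimv[OF i, of n] and b = dimv[OF i, of "Suc n"] and dc = dimd[OF i, of n]
    have "K i *\<^sub>v d i (Suc n) = K i *\<^sub>v d i n + \<Delta>t \<cdot>\<^sub>v ((1 - \<gamma>) \<cdot>\<^sub>v (K i *\<^sub>v v i n) + \<gamma> \<cdot>\<^sub>v (K i *\<^sub>v v i (Suc n)))"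
      unfolding upd[OF i] using Kc a b dc
      by (simp add: mult_add_distrib_mat_vec[OF Kc] mult_mat_vec[OF Kc])
    then show ?thesis using Kc a b dc z
      by (simp add: scalar_prod_add_distrib[of _ "m i"])
  qed
  have Msym: "transpose_mat (M i) = M i" if "i \<in> {1..S}" for i
    using Mspd[OF that] unfolding sym_pos_def_def symmetric_mat_def by simp
  have Ksym: "transpose_mat (K i) = K i" if "i \<in> {1..S}" for i
    using Kspsd[OF that] unfolding sym_pos_semidef_def symmetric_mat_def by simp
  have Kpsd: "x \<bullet> (K i *\<^sub>v x) \<ge> 0" if i: "i \<in> {1..S}" and x: "x \<in> carrier_vec (m i)" for i x
    using Kspsd[OF i] dimK[OF i] x unfolding sym_pos_semidef_def by auto
  define E where "E = (\<lambda>n. \<Sum>i\<in>{1..S}. v i n \<bullet> (M i *\<^sub>v v i n) - \<alpha> * (v i n \<bullet> (K i *\<^sub>v v i n)))"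
  have Edec: "E (Suc n) \<le> E n" for n
  proof -
    define R where "R = (\<lambda>i k l. v i k \<bullet> (transpose_mat (C i) *\<^sub>v lam l))"
    define kq where "kq = (\<lambda>i. v i n \<bullet> (K i *\<^sub>v v i n) + 2 * (v i (Suc n) \<bullet> (K i *\<^sub>v v i n)) + v i (Suc n) \<bullet> (K i *\<^sub>v v i (Suc n)))"
    have per: "(v i (Suc n) \<bullet> (M i *\<^sub>v v i (Suc n)) - \<alpha> * (v i (Suc n) \<bullet> (K i *\<^sub>v v i (Suc n))))
       - (v i n \<bullet> (M i *\<^sub>v v i n) - \<alpha> * (v i n \<bullet> (K i *\<^sub>v v i n))) + \<Delta>t/2 * kq i
       = (R i n (Suc n) - R i n n) + (R i (Suc n) (Suc n) - R i (Suc n) n)" if i: "i \<in> {1..S}" for i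
    proof -
      note a = dimv[OF i, of n] and b = dimv[OF i, of "Suc n"]
      have e1: "R i n n = v i n \<bullet> (M i *\<^sub>v v i n) + v i n \<bullet> (K i *\<^sub>v d i n)"
        unfolding R_def using E1[OF i a] by simp
      have e2: "R i n (Suc n) = v i n \<bullet> (M i *\<^sub>v v i (Suc n)) + (v i n \<bullet> (K i *\<^sub>v d i n)
          + \<Delta>t * ((1 - \<gamma>) * (v i n \<bullet> (K i *\<^sub>v v i n)) + \<gamma> * (v i n \<bullet> (K i *\<^sub>v v i (Suc n)))))"
        unfolding R_def using E1[OF i a, of "Suc n"] Kupd[OF i a, of n] by simp
      have e3: "R i (Suc n) n = v i (Suc n) \<bullet> (M i *\<^sub>v v i n) + v i (Suc n) \<bullet> (K i *\<^sub>v d i n)"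
        unfolding R_def using E1[OF i b] by simp
      have e4: "R i (Suc n) (Suc n) = v i (Suc n) \<bullet> (M i *\<^sub>v v i (Suc n)) + (v i (Suc n) \<bullet> (K i *\<^sub>v d i n)
          + \<Delta>t * ((1 - \<gamma>) * (v i (Suc n) \<bullet> (K i *\<^sub>v v i n)) + \<gamma> * (v i (Suc n) \<bullet> (K i *\<^sub>v v i (Suc n)))))"
        unfolding R_def using E1[OF i b, of "Suc n"] Kupd[OF i b, of n] by simp
      have s1: "v i (Suc n) \<bullet> (M i *\<^sub>v v i n) = v i n \<bullet> (M i *\<^sub>v v i (Suc n))"
        using sym_swap[OF dimM[OF i] Msym[OF i] b a] .
      have s2: "v i (Suc n) \<bullet> (K i *\<^sub>v v i n) = v i n \<bullet> (K i *\<^sub>v v i (Suc n))"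
        using sym_swap[OF dimK[OF i] Ksym[OF i] b a] .
      show ?thesis unfolding kq_def
        by (rule energy_alg[OF e1 e2 e3 e4 s1 s2 \<alpha>_def])
    qed
    have kqnn: "kq i \<ge> 0" if i: "i \<in> {1..S}" for i
    proof -
      note a = dimv[OF i, of n] and b = dimv[OF i, of "Suc n"]
      have "(v i n + 1 \<cdot>\<^sub>v v i (Suc n)) \<bullet> (K i *\<^sub>v (v i n + 1 \<cdot>\<^sub>v v i (Suc n))) = kq i"
        unfolding kq_def quad_expand[OF dimK[OF i] Ksym[OF i] a b] by simp
      moreover have "(v i n + 1 \<cdot>\<^sub>v v i (Suc n)) \<bullet> (K i *\<^sub>v (v i n + 1 \<cdot>\<^sub>v v i (Suc n))) \<ge> 0"
        using Kpsd[OF i] a b by simp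
      ultimately show ?thesis by simp
    qed
    have "E (Suc n) - E n + \<Delta>t/2 * (\<Sum>i\<in>{1..S}. kq i)
       = (\<Sum>i\<in>{1..S}. (R i n (Suc n) - R i n n) + (R i (Suc n) (Suc n) - R i (Suc n) n))"
    proof -
      have "E (Suc n) - E n + \<Delta>t/2 * (\<Sum>i\<in>{1..S}. kq i) = (\<Sum>i\<in>{1..S}.
         (v i (Suc n) \<bullet> (M i *\<^sub>v v i (Suc n)) - \<alpha> * (v i (Suc n) \<bullet> (K i *\<^sub>v v i (Suc n))))
       - (v i n \<bullet> (M i *\<^sub>v v i n) - \<alpha> * (v i n \<bullet> (K i *\<^sub>v v i n))) + \<Delta>t/2 * kq i)"
        unfolding E_def by (simp only: sum.distrib sum_subtractf sum_distrib_left)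
      also have "\<dots> = (\<Sum>i\<in>{1..S}. (R i n (Suc n) - R i n n) + (R i (Suc n) (Suc n) - R i (Suc n) n))"
        by (rule sum.cong[OF refl]) (rule per)
      finally show ?thesis .
    qed
    also have "\<dots> = 0"
      unfolding sum.distrib sum_subtractf unfolding R_def using L0[OF diml] by simp
    finally have "E (Suc n) - E n = - (\<Delta>t/2 * (\<Sum>i\<in>{1..S}. kq i))" by simp
    moreover have "\<Delta>t/2 * (\<Sum>i\<in>{1..S}. kq i) \<ge> 0"
    proof -
      have "(\<Sum>i\<in>{1..S}. kq i) \<ge> 0" by (rule sum_nonneg) (use kqnn in auto)
      then show ?thesis using dt by simp
    qed
    ultimately show ?thesis by simp
  qed
  have Ele: "E n \<le> E 0" for n
  proof (induction n)
    case (Suc n) then show ?case using Edec[of n] by linarith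
  qed simp
  have coer: "\<forall>i\<in>{1..S}. \<exists>c>0. \<forall>x\<in>carrier_vec (m i). c * (x \<bullet> x) \<le> x \<bullet> (M i *\<^sub>v x) - \<alpha> * (x \<bullet> (K i *\<^sub>v x))"
  proof
    fix i assume i: "i \<in> {1..S}"
    note Mc = dimM[OF i] and Kc = dimK[OF i]
    have pos: "x \<bullet> (M i *\<^sub>v x) - \<alpha> * (x \<bullet> (K i *\<^sub>v x)) > 0" if x: "x \<in> carrier_vec (m i)" "x \<noteq> 0\<^sub>v (m i)" for x
    proof -
      have Mx: "x \<bullet> (M i *\<^sub>v x) > 0" using pd_quad[OF Mc Mspd[OF i] x] .
      have Kx: "x \<bullet> (K i *\<^sub>v x) \<ge> 0" using Kpsd[OF i x(1)] .
      show ?thesis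
      proof (cases "\<gamma> < 1/2")
        case False
        then have "\<alpha> \<le> 0" unfolding \<alpha>_def using dt by (simp add: mult_nonpos_nonneg)
        then have "\<alpha> * (x \<bullet> (K i *\<^sub>v x)) \<le> 0" using Kx by (simp add: mult_nonpos_nonneg)
        then show ?thesis using Mx by simp
      next
        case True
        have al: "\<alpha> > 0" unfolding \<alpha>_def using True dt by simp
        have mpos: "m i > 0" using x by (cases "m i") auto
        obtain \<omega> where om: "\<omega> \<in> gen_eigenvalues (K i) (M i)"
            "\<forall>y\<in>carrier_vec (m i). y \<bullet> (K i *\<^sub>v y) \<le> \<omega> * (y \<bullet> (M i *\<^sub>v y))"
          using rayleigh[OF Mc Kc mpos Mspd[OF i]] Kspsd[OF i] unfolding sym_pos_semidef_def by blast
        have "\<omega> \<le> omega_max (K i) (M i)" unfolding omega_max_def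
          using gen_eig_finite[OF Mc Kc Mspd[OF i]] om(1) by simp
        moreover have "\<Delta>t * (1 - 2*\<gamma>) * omega_max (K i) (M i) < 2" using stab[OF True] i by blast
        ultimately have "\<alpha> * \<omega> < 1"
        proof -
          assume w: "\<omega> \<le> omega_max (K i) (M i)" and st: "\<Delta>t * (1 - 2*\<gamma>) * omega_max (K i) (M i) < 2"
          have "\<alpha> * \<omega> \<le> \<alpha> * omega_max (K i) (M i)" using al w by (simp add: mult_left_mono)
          moreover have "\<alpha> * omega_max (K i) (M i) = (\<Delta>t * (1 - 2*\<gamma>) * omega_max (K i) (M i)) / 2"
            unfolding \<alpha>_def by (simp add: algebra_simps)
          ultimately show ?thesis using st by linarith
        qed
        have "\<alpha> * (x \<bullet> (K i *\<^sub>v x)) \<le> \<alpha> * (\<omega> * (x \<bullet> (M i *\<^sub>v x)))"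
          using om(2) x(1) al by (simp add: mult_left_mono)
        also have "\<dots> = (\<alpha> * \<omega>) * (x \<bullet> (M i *\<^sub>v x))" by simp
        also have "\<dots> < 1 * (x \<bullet> (M i *\<^sub>v x))"
          using \<open>\<alpha> * \<omega> < 1\<close> Mx by (intro mult_strict_right_mono) auto
        finally show ?thesis by simp
      qed
    qed
    have hom: "(a \<cdot>\<^sub>v x) \<bullet> (M i *\<^sub>v (a \<cdot>\<^sub>v x)) - \<alpha> * ((a \<cdot>\<^sub>v x) \<bullet> (K i *\<^sub>v (a \<cdot>\<^sub>v x)))
       = a^2 * (x \<bullet> (M i *\<^sub>v x) - \<alpha> * (x \<bullet> (K i *\<^sub>v x)))" if x: "x \<in> carrier_vec (m i)" for a x
      using quad_hom[OF Mc x] quad_hom[OF Kc x] by (simp add: algebra_simps)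
    have cont: "continuous_on UNIV (\<lambda>f. vec (m i) f \<bullet> (M i *\<^sub>v vec (m i) f) - \<alpha> * (vec (m i) f \<bullet> (K i *\<^sub>v vec (m i) f)))"
      using quad_cont[OF Mc] quad_cont[OF Kc] by (intro continuous_intros)
    show "\<exists>c>0. \<forall>x\<in>carrier_vec (m i). c * (x \<bullet> x) \<le> x \<bullet> (M i *\<^sub>v x) - \<alpha> * (x \<bullet> (K i *\<^sub>v x))"
      by (rule homog_lower[where g = "\<lambda>x. x \<bullet> (M i *\<^sub>v x) - \<alpha> * (x \<bullet> (K i *\<^sub>v x))", OF pos hom cont])
  qed
  then obtain cf where cf: "\<forall>i\<in>{1..S}. cf i > 0 \<and> (\<forall>x\<in>carrier_vec (m i). cf i * (x \<bullet> x) \<le> x \<bullet> (M i *\<^sub>v x) - \<alpha> * (x \<bullet> (K i *\<^sub>v x)))"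
    by (metis bchoice)
  define Bv where "Bv = (\<lambda>i. E 0 / cf i)"
  have vb: "v i n \<bullet> v i n \<le> Bv i" if i: "i \<in> {1..S}" for i n
  proof -
    have gnn: "v j n \<bullet> (M j *\<^sub>v v j n) - \<alpha> * (v j n \<bullet> (K j *\<^sub>v v j n)) \<ge> 0" if j: "j \<in> {1..S}" for j
      using cf j dimv[OF j, of n] self_nonneg[of "v j n"] by (meson mult_nonneg_nonneg less_imp_le order_trans)
    have "cf i * (v i n \<bullet> v i n) \<le> v i n \<bullet> (M i *\<^sub>v v i n) - \<alpha> * (v i n \<bullet> (K i *\<^sub>v v i n))"
      using cf i dimv[OF i] by blast
    also have "\<dots> \<le> E n" unfolding E_def
      by (rule member_le_sum[where f = "\<lambda>i. v i n \<bullet> (M i *\<^sub>v v i n) - \<alpha> * (v i n \<bullet> (K i *\<^sub>v v i n))"])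
        (use i gnn in auto)
    also have "\<dots> \<le> E 0" by (rule Ele)
    finally show ?thesis unfolding Bv_def using cf i by (simp add: field_simps)
  qed
  have dd: "d i (Suc n) - d i n = \<Delta>t \<cdot>\<^sub>v ((1 - \<gamma>) \<cdot>\<^sub>v v i n + \<gamma> \<cdot>\<^sub>v v i (Suc n))" if i: "i \<in> {1..S}" for i n
    by (rule vec_diff_eq[OF dimd[OF i] dimd[OF i] _ upd[OF i]]) (use dimv[OF i] in simp)
  define Bd where "Bd = (\<lambda>i. \<Delta>t^2 * (4 * Bv i))"
  have db: "(d i (Suc n) - d i n) \<bullet> (d i (Suc n) - d i n) \<le> Bd i" if i: "i \<in> {1..S}" for i n
  proof -
    note a = dimv[OF i, of n] and b = dimv[OF i, of "Suc n"]
    have "((1 - \<gamma>) \<cdot>\<^sub>v v i n + \<gamma> \<cdot>\<^sub>v v i (Suc n)) \<bullet> ((1 - \<gamma>) \<cdot>\<^sub>v v i n + \<gamma> \<cdot>\<^sub>v v i (Suc n))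
       \<le> 2 * ((1 - \<gamma>)^2 * (v i n \<bullet> v i n)) + 2 * (\<gamma>^2 * (v i (Suc n) \<bullet> v i (Suc n)))"
      using sumsq[of "(1 - \<gamma>) \<cdot>\<^sub>v v i n" "m i" "\<gamma> \<cdot>\<^sub>v v i (Suc n)"] a b smult_sq[OF a] smult_sq[OF b] by simp
    also have "\<dots> \<le> 2 * (1 * Bv i) + 2 * (1 * Bv i)"
    proof -
      have g1: "(1 - \<gamma>)^2 \<le> 1" "\<gamma>^2 \<le> 1" using gam by (auto simp: power_le_one abs_square_le_1)
      have "(1 - \<gamma>)^2 * (v i n \<bullet> v i n) \<le> 1 * Bv i"
        by (rule mult_mono) (use g1 vb[OF i] self_nonneg in auto)
      moreover have "\<gamma>^2 * (v i (Suc n) \<bullet> v i (Suc n)) \<le> 1 * Bv i"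
        by (rule mult_mono) (use g1 vb[OF i] self_nonneg in auto)
      ultimately show ?thesis by simp
    qed
    finally have "((1 - \<gamma>) \<cdot>\<^sub>v v i n + \<gamma> \<cdot>\<^sub>v v i (Suc n)) \<bullet> ((1 - \<gamma>) \<cdot>\<^sub>v v i n + \<gamma> \<cdot>\<^sub>v v i (Suc n)) \<le> 4 * Bv i"
      by simp
    then have "\<Delta>t^2 * (((1 - \<gamma>) \<cdot>\<^sub>v v i n + \<gamma> \<cdot>\<^sub>v v i (Suc n)) \<bullet> ((1 - \<gamma>) \<cdot>\<^sub>v v i n + \<gamma> \<cdot>\<^sub>v v i (Suc n)))
       \<le> \<Delta>t^2 * (4 * Bv i)" by (rule mult_left_mono) simp
    moreover have "((1 - \<gamma>) \<cdot>\<^sub>v v i n + \<gamma> \<cdot>\<^sub>v v i (Suc n)) \<in> carrier_vec (m i)" using a b by simp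
    ultimately show ?thesis unfolding dd[OF i] Bd_def using smult_sq by metis
  qed
  have upM: "\<forall>i\<in>{1..S}. \<exists>c. \<forall>x\<in>carrier_vec (m i). (M i *\<^sub>v x) \<bullet> (M i *\<^sub>v x) \<le> c * (x \<bullet> x)"
  proof
    fix i assume i: "i \<in> {1..S}"
    show "\<exists>c. \<forall>x\<in>carrier_vec (m i). (M i *\<^sub>v x) \<bullet> (M i *\<^sub>v x) \<le> c * (x \<bullet> x)"
      by (rule homog_upper[where g = "\<lambda>x. (M i *\<^sub>v x) \<bullet> (M i *\<^sub>v x)"])
        (use hom_bilin[OF dimM[OF i] dimM[OF i]] cont_bilin[OF dimM[OF i] dimM[OF i]] in auto)
  qed
  then obtain cM where cM: "\<forall>i\<in>{1..S}. \<forall>x\<in>carrier_vec (m i). (M i *\<^sub>v x) \<bullet> (M i *\<^sub>v x) \<le> cM i * (x \<bullet> x)"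
    by (metis bchoice)
  have upK: "\<forall>i\<in>{1..S}. \<exists>c. \<forall>x\<in>carrier_vec (m i). (K i *\<^sub>v x) \<bullet> (K i *\<^sub>v x) \<le> c * (x \<bullet> x)"
  proof
    fix i assume i: "i \<in> {1..S}"
    show "\<exists>c. \<forall>x\<in>carrier_vec (m i). (K i *\<^sub>v x) \<bullet> (K i *\<^sub>v x) \<le> c * (x \<bullet> x)"
      by (rule homog_upper[where g = "\<lambda>x. (K i *\<^sub>v x) \<bullet> (K i *\<^sub>v x)"])
        (use hom_bilin[OF dimK[OF i] dimK[OF i]] cont_bilin[OF dimK[OF i] dimK[OF i]] in auto)
  qed
  then obtain cK where cK: "\<forall>i\<in>{1..S}. \<forall>x\<in>carrier_vec (m i). (K i *\<^sub>v x) \<bullet> (K i *\<^sub>v x) \<le> cK i * (x \<bullet> x)"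
    by (metis bchoice)
  define BL where "BL = (\<lambda>i. 2 * (\<bar>cM i\<bar> * (4 * Bv i)) + 2 * (\<bar>cK i\<bar> * Bd i))"
  have lb: "(transpose_mat (C i) *\<^sub>v (lam (Suc n) - lam n)) \<bullet> (transpose_mat (C i) *\<^sub>v (lam (Suc n) - lam n)) \<le> BL i"
    if i: "i \<in> {1..S}" for i n
  proof -
    note a = dimv[OF i, of n] and b = dimv[OF i, of "Suc n"] and da = dimd[OF i, of n]
      and db' = dimd[OF i, of "Suc n"] and Mc = dimM[OF i] and Kc = dimK[OF i]
    have Ct: "transpose_mat (C i) \<in> carrier_mat (m i) p" using dimC[OF i] by simp
    have eqv: "transpose_mat (C i) *\<^sub>v (lam (Suc n) - lam n)
        = M i *\<^sub>v (v i (Suc n) - v i n) + K i *\<^sub>v (d i (Suc n) - d i n)"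
    proof -
      have "transpose_mat (C i) *\<^sub>v (lam (Suc n) - lam n)
          = transpose_mat (C i) *\<^sub>v lam (Suc n) - transpose_mat (C i) *\<^sub>v lam n"
        by (rule mult_minus_distrib_mat_vec[OF Ct diml diml])
      also have "\<dots> = (M i *\<^sub>v v i (Suc n) + K i *\<^sub>v d i (Suc n)) - (M i *\<^sub>v v i n + K i *\<^sub>v d i n)"
        using eq1[OF i] by simp
      also have "\<dots> = (M i *\<^sub>v v i (Suc n) - M i *\<^sub>v v i n) + (K i *\<^sub>v d i (Suc n) - K i *\<^sub>v d i n)"
        by (rule eq_vecI) (use Mc Kc a b da db' in auto)
      also have "\<dots> = M i *\<^sub>v (v i (Suc n) - v i n) + K i *\<^sub>v (d i (Suc n) - d i n)"
        using mult_minus_distrib_mat_vec[OF Mc b a] mult_minus_distrib_mat_vec[OF Kc db' da] by simp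
      finally show ?thesis .
    qed
    define P where "P = M i *\<^sub>v (v i (Suc n) - v i n)"
    define Q where "Q = K i *\<^sub>v (d i (Suc n) - d i n)"
    have dvc: "v i (Suc n) - v i n \<in> carrier_vec (m i)" using a b by simp
    have ddc: "d i (Suc n) - d i n \<in> carrier_vec (m i)" using da db' by simp
    have Pc: "P \<in> carrier_vec (m i)" unfolding P_def using Mc dvc by simp
    have Qc: "Q \<in> carrier_vec (m i)" unfolding Q_def using Kc ddc by simp
    have vv: "(v i (Suc n) - v i n) \<bullet> (v i (Suc n) - v i n) \<le> 4 * Bv i"
      using sumsq_minus[OF b a] vb[OF i, of n] vb[OF i, of "Suc n"] by linarith
    have PP: "P \<bullet> P \<le> \<bar>cM i\<bar> * (4 * Bv i)"
    proof -
      have "P \<bullet> P \<le> cM i * ((v i (Suc n) - v i n) \<bullet> (v i (Suc n) - v i n))"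
        unfolding P_def using cM i dvc by blast
      also have "\<dots> \<le> \<bar>cM i\<bar> * ((v i (Suc n) - v i n) \<bullet> (v i (Suc n) - v i n))"
        using self_nonneg by (intro mult_right_mono) auto
      also have "\<dots> \<le> \<bar>cM i\<bar> * (4 * Bv i)" using vv by (intro mult_left_mono) auto
      finally show ?thesis .
    qed
    have QQ: "Q \<bullet> Q \<le> \<bar>cK i\<bar> * Bd i"
    proof -
      have "Q \<bullet> Q \<le> cK i * ((d i (Suc n) - d i n) \<bullet> (d i (Suc n) - d i n))"
        unfolding Q_def using cK i ddc by blast
      also have "\<dots> \<le> \<bar>cK i\<bar> * ((d i (Suc n) - d i n) \<bullet> (d i (Suc n) - d i n))"
        using self_nonneg by (intro mult_right_mono) auto
      also have "\<dots> \<le> \<bar>cK i\<bar> * Bd i" using db[OF i] by (intro mult_left_mono) auto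
      finally show ?thesis .
    qed
    have "(P + Q) \<bullet> (P + Q) \<le> 2 * (P \<bullet> P) + 2 * (Q \<bullet> Q)" by (rule sumsq[OF Pc Qc])
    then show ?thesis unfolding eqv BL_def P_def[symmetric] Q_def[symmetric] using PP QQ by linarith
  qed
  define G where "G = (\<lambda>x. \<Sum>i\<in>{1..S}. (transpose_mat (C i) *\<^sub>v x) \<bullet> (transpose_mat (C i) *\<^sub>v x))"
  define L where "L = concat (map (\<lambda>i. cols (C i)) [1..<S+1])"
  have setL: "y \<in> set L \<longleftrightarrow> (\<exists>i\<in>{1..S}. y \<in> set (cols (C i)))" for y
  proof -
    have "set [1..<S+1] = {1..S}" by auto
    then show ?thesis unfolding L_def by simp
  qed
  have Lc: "set L \<subseteq> carrier_vec p"
  proof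
    fix y assume "y \<in> set L"
    then obtain i where i: "i \<in> {1..S}" "y \<in> set (cols (C i))" unfolding setL by blast
    then show "y \<in> carrier_vec p" using dimC[OF i(1)] cols_dim by blast
  qed
  have Hc: "hblock p S C \<in> carrier_mat p (length L)" unfolding hblock_def L_def[symmetric] by simp
  have Hcols: "set (cols (hblock p S C)) = set L" unfolding hblock_def L_def[symmetric] using Lc by simp
  have Gpos: "G x > 0" if x: "x \<in> carrier_vec p" "x \<noteq> 0\<^sub>v p" for x
  proof (rule ccontr)
    assume "\<not> G x > 0"
    moreover have nn: "\<forall>i\<in>{1..S}. (transpose_mat (C i) *\<^sub>v x) \<bullet> (transpose_mat (C i) *\<^sub>v x) \<ge> 0"
      using self_nonneg by blast
    moreover have "G x \<ge> 0" unfolding G_def by (rule sum_nonneg) (use nn in blast)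
    ultimately have "G x = 0" by linarith
    then have "(\<Sum>i\<in>{1..S}. (transpose_mat (C i) *\<^sub>v x) \<bullet> (transpose_mat (C i) *\<^sub>v x)) = 0"
      unfolding G_def .
    then have z: "\<forall>i\<in>{1..S}. (transpose_mat (C i) *\<^sub>v x) \<bullet> (transpose_mat (C i) *\<^sub>v x) = 0"
      using sum_nonneg_eq_0_iff[of "{1..S}" "\<lambda>i. (transpose_mat (C i) *\<^sub>v x) \<bullet> (transpose_mat (C i) *\<^sub>v x)"] nn
      by simp
    have orth: "\<forall>y\<in>set (cols (hblock p S C)). y \<bullet> x = 0"
    proof
      fix y assume "y \<in> set (cols (hblock p S C))"
      then obtain i where i: "i \<in> {1..S}" "y \<in> set (cols (C i))" unfolding Hcols setL by blast
      have Ci: "C i \<in> carrier_mat p (m i)" using dimC[OF i(1)] .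
      have "y \<in> col (C i) ` {0..<dim_col (C i)}" using i(2) unfolding cols_def by simp
      then obtain c where c: "c < m i" "y = col (C i) c" using Ci by auto
      have zc: "transpose_mat (C i) *\<^sub>v x \<in> carrier_vec (m i)" using Ci x(1) by simp
      have "transpose_mat (C i) *\<^sub>v x = 0\<^sub>v (m i)"
        by (rule zero_iff_self[OF zc]) (use z i(1) in blast)
      then have "(transpose_mat (C i) *\<^sub>v x) $ c = 0" using c(1) by simp
      moreover have "(transpose_mat (C i) *\<^sub>v x) $ c = row (transpose_mat (C i)) c \<bullet> x"
        using c(1) Ci by simp
      moreover have "row (transpose_mat (C i)) c = col (C i) c" using c(1) Ci by simp
      ultimately show "y \<bullet> x = 0" using c(2) by simp
    qed
    have "x = 0\<^sub>v p" by (rule rank_orth[OF Hc Crank x(1) orth])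
    then show False using x(2) by simp
  qed
  have Ghom: "G (a \<cdot>\<^sub>v x) = a^2 * G x" if x: "x \<in> carrier_vec p" for a x
  proof -
    have h: "(transpose_mat (C i) *\<^sub>v (a \<cdot>\<^sub>v x)) \<bullet> (transpose_mat (C i) *\<^sub>v (a \<cdot>\<^sub>v x))
       = a^2 * ((transpose_mat (C i) *\<^sub>v x) \<bullet> (transpose_mat (C i) *\<^sub>v x))" if i: "i \<in> {1..S}" for i
    proof -
      have Ct: "transpose_mat (C i) \<in> carrier_mat (m i) p" using dimC[OF i] by simp
      show ?thesis by (rule hom_bilin[OF Ct Ct x])
    qed
    show ?thesis unfolding G_def sum_distrib_left by (rule sum.cong[OF refl]) (rule h)
  qed
  have Gcont: "continuous_on UNIV (\<lambda>f. G (vec p f))"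
    unfolding G_def
  proof (rule continuous_on_sum)
    fix i assume i: "i \<in> {1..S}"
    have Ct: "transpose_mat (C i) \<in> carrier_mat (m i) p" using dimC[OF i] by simp
    show "continuous_on UNIV (\<lambda>f. (transpose_mat (C i) *\<^sub>v vec p f) \<bullet> (transpose_mat (C i) *\<^sub>v vec p f))"
      by (rule cont_bilin[OF Ct Ct])
  qed
  obtain cl where cl: "cl > 0" "\<forall>x\<in>carrier_vec p. cl * (x \<bullet> x) \<le> G x"
    using homog_lower[of p G, OF Gpos Ghom Gcont] by blast
  have lamb: "(lam (Suc n) - lam n) \<bullet> (lam (Suc n) - lam n) \<le> (\<Sum>i\<in>{1..S}. BL i) / cl" for n
  proof -
    have "cl * ((lam (Suc n) - lam n) \<bullet> (lam (Suc n) - lam n)) \<le> G (lam (Suc n) - lam n)"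
      using cl diml[of n] diml[of "Suc n"] by simp
    also have "\<dots> \<le> (\<Sum>i\<in>{1..S}. BL i)" unfolding G_def by (rule sum_mono) (rule lb)
    finally show ?thesis using cl(1) by (simp add: field_simps)
  qed
  show ?thesis
  proof (intro conjI ballI)
    fix i assume i: "i \<in> {1..S}"
    show "bounded_seq (\<lambda>n. v i n)" by (rule bounded_from_sq[OF vb[OF i]])
    show "bounded_seq (\<lambda>n. d i (Suc n) - d i n)" by (rule bounded_from_sq[OF db[OF i]])
  next
    show "bounded_seq (\<lambda>n. lam (Suc n) - lam n)" by (rule bounded_from_sq[OF lamb])
  qed
qed


end
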